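(* Let $M$ be a deterministic classical Turing machine operating in time $f(n)$, where $n$ is the input size. Then there exists a measurement-based quantum Turing machine $M'$ operating in expected time $O(f(n))$ such that for every input $x$, $M(x)=M'(\ket x)$.
   Context: A deterministic Turing machine (TM) is a triple $M=(K,\Sigma,\delta)$: $K$ finite set of states with initial state $s$, $\Sigma$ finite alphabet containing a blank $\#$, $\delta:K\times\Sigma\to(K\cup\{\text{yes},\text{no},h\})\times\Sigma\times\{\leftarrow,\rightarrow,-\}$; its output is yes/no if that state is reached, and the final tape contents if $h$ is reached (for a quantum machine ending in $h$, equality of outputs means the final quantum tape is the basis state encoding the classical tape contents). A (one-tape) classically-controlled quantum Turing machine (CQTM) is a quintuple $M=(K,\Sigma_C,\Sigma_Q,\mathcal A,\delta)$: $K$ finite set of classical states with initial state $s$; $\Sigma_Q$ finite alphabet containing blank $\#$, labelling an orthonormal basis of each quantum cell of an infinite tape; $\Sigma_C$ finite alphabet of classical outcomes containing $\#,\overline\#$; $\mathcal A$ finite set of one-cell admissible transformations (families $\{M_c\}_c$ of operators with $\sum_c M_c^\dagger M_c=\mathrm{Id}$, outcomes in $\Sigma_C$) containing the blank test $\{\ket\#\bra\#,I-\ket\#\bra\#\}$; $\delta:K\times\Sigma_C\to(K\cup\{\text{yes},\text{no},h\})\times\{\leftarrow,\rightarrow,-\}\times\mathcal A$ total. At each step (one time unit), in state $q$ with last outcome $\tau$ and $\delta(q,\tau)=(p,D,A)$, the head moves by $D$, then $A=\{M_c\}$ is applied to the pointed cell, yielding outcome $c$ with probability $\bra\psi M_c^\dagger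 M_c\ket\psi$ and new tape state $M_c\ket\psi$ normalized; the new state is $p$, last outcome $c$. The input is placed on adjacent cells (others $\ket\#$), the head starts on the blank cell just left of the input, initial state $s$, initial last outcome $\#$. Halting on yes/no gives that output; halting on $h$ gives the state of the tape from its leftmost to rightmost non-$\ket\#$ cell. A measurement-based quantum Turing machine (MQTM) is a CQTM all of whose admissible transformations in $\mathcal A$ are projective measurements, i.e. families $\{P_k\}$ of orthogonal projectors with $P_kP_l=\delta_{kl}P_k$ and $\sum_k P_k=\mathrm{Id}$. Its running time is a random variable; "expected time" refers to its expectation. *)

theory Defs
  imports "HOL-Analysis.Analysis"
begin

datatype 's st = St 's | Yes | No | Halt

datatype dir = Lft | Rgt | Stay

fun mv :: "dir \<Rightarrow> int" where
  "mv Lft = -1" | "mv Rgt = 1" | "mv Stay = 0"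

definition halted :: "'s st \<Rightarrow> bool" where
  "halted q \<longleftrightarrow> (\<forall>p. q \<noteq> St p)"

datatype 'a tm_out = OYes | ONo | OTape "'a list"

definition trim :: "'a \<Rightarrow> (int \<Rightarrow> 'a) \<Rightarrow> 'a list" where
  "trim b t = (let S = {i. t i \<noteq> b} in if S = {} then [] else map t [Min S..Max S])"

text \<open>Input placed on cells 1..n, all other cells blank; the head starts on cell 0.\<close>
definition init_tape :: "'a \<Rightarrow> 'a list \<Rightarrow> int \<Rightarrow> 'a" where
  "init_tape b x = (\<lambda>i. if 1 \<le> i \<and> i \<le> int (length x) then x ! nat (i - 1) else b)"

record ('s, 'a) tm =
  tm_states :: "'s set"
  tm_alpha :: "'a set"
  tm_blank :: 'a
  tm_start :: 's
  tm_delta :: "'s \<Rightarrow> 'a \<Rightarrow> 's st \<times> 'a \<times> dir"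

definition wf_tm :: "('s, 'a) tm \<Rightarrow> bool" where
  "wf_tm M \<longleftrightarrow> finite (tm_states M) \<and> finite (tm_alpha M) \<and> tm_blank M \<in> tm_alpha M
     \<and> tm_start M \<in> tm_states M
     \<and> (\<forall>q\<in>tm_states M. \<forall>a\<in>tm_alpha M. case tm_delta M q a of (p, b, D) \<Rightarrow>
          p \<in> St ` tm_states M \<union> {Yes, No, Halt} \<and> b \<in> tm_alpha M)"

fun tm_step :: "('s, 'a) tm \<Rightarrow> 's st \<times> (int \<Rightarrow> 'a) \<times> int \<Rightarrow> 's st \<times> (int \<Rightarrow> 'a) \<times> int" where
  "tm_step M (q, t, h) = (case q of
      St p \<Rightarrow> (case tm_delta M p (t h) of (p', b, D) \<Rightarrow> (p', t(h := b), h + mv D))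
    | _ \<Rightarrow> (q, t, h))"

definition tm_conf :: "('s, 'a) tm \<Rightarrow> 'a list \<Rightarrow> nat \<Rightarrow> 's st \<times> (int \<Rightarrow> 'a) \<times> int" where
  "tm_conf M x n = (tm_step M ^^ n) (St (tm_start M), init_tape (tm_blank M) x, 0)"

definition valid_input :: "('s, 'a) tm \<Rightarrow> 'a list \<Rightarrow> bool" where
  "valid_input M x \<longleftrightarrow> set x \<subseteq> tm_alpha M - {tm_blank M}"

definition tm_runs_in_time :: "('s, 'a) tm \<Rightarrow> (nat \<Rightarrow> nat) \<Rightarrow> bool" where
  "tm_runs_in_time M f \<longleftrightarrow>
     (\<forall>x. valid_input M x \<longrightarrow> (\<exists>n\<le>f (length x). halted (fst (tm_conf M x n))))"

definition tm_output :: "('s, 'a) tm \<Rightarrow> 'a list \<Rightarrow> 'a tm_out" where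
  "tm_output M x = (case tm_conf M x (LEAST n. halted (fst (tm_conf M x n))) of (q, t, h) \<Rightarrow>
      (case q of Yes \<Rightarrow> OYes | No \<Rightarrow> ONo | _ \<Rightarrow> OTape (trim (tm_blank M) t)))"

text \<open>A one-cell operator is a matrix indexed by the quantum alphabet: F k a = <k|F|a>.
  An admissible transformation is a family of such operators indexed by classical outcomes.\<close>
type_synonym 'q mat = "'q \<Rightarrow> 'q \<Rightarrow> complex"

record 'q cqtm =
  cq_states :: "nat set"
  cq_calpha :: "nat set"
  cq_cblank :: nat
  cq_cblankbar :: nat
  cq_qalpha :: "'q set"
  cq_qblank :: 'q
  cq_adm :: "(nat \<Rightarrow> 'q mat) set"
  cq_start :: nat
  cq_delta :: "nat \<Rightarrow> nat \<Rightarrow> nat st \<times> dir \<times> (nat \<Rightarrow> 'q mat)"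

definition supported :: "nat set \<Rightarrow> 'q set \<Rightarrow> (nat \<Rightarrow> 'q mat) \<Rightarrow> bool" where
  "supported SC SQ F \<longleftrightarrow> (\<forall>c k a. c \<notin> SC \<or> k \<notin> SQ \<or> a \<notin> SQ \<longrightarrow> F c k a = 0)"

definition admissible :: "nat set \<Rightarrow> 'q set \<Rightarrow> (nat \<Rightarrow> 'q mat) \<Rightarrow> bool" where
  "admissible SC SQ F \<longleftrightarrow> supported SC SQ F \<and>
     (\<forall>a\<in>SQ. \<forall>b\<in>SQ. (\<Sum>c\<in>SC. \<Sum>k\<in>SQ. cnj (F c k a) * F c k b) = (if a = b then 1 else 0))"

definition projective :: "nat set \<Rightarrow> 'q set \<Rightarrow> (nat \<Rightarrow> 'q mat) \<Rightarrow> bool" where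
  "projective SC SQ F \<longleftrightarrow> supported SC SQ F
     \<and> (\<forall>c\<in>SC. \<forall>a\<in>SQ. \<forall>b\<in>SQ. F c a b = cnj (F c b a))
     \<and> (\<forall>c\<in>SC. \<forall>d\<in>SC. \<forall>a\<in>SQ. \<forall>b\<in>SQ.
          (\<Sum>k\<in>SQ. F c a k * F d k b) = (if c = d then F c a b else 0))
     \<and> (\<forall>a\<in>SQ. \<forall>b\<in>SQ. (\<Sum>c\<in>SC. F c a b) = (if a = b then 1 else 0))"

definition blank_test :: "'q cqtm \<Rightarrow> nat \<Rightarrow> 'q mat" where
  "blank_test M = (\<lambda>c k a.
     if k \<in> cq_qalpha M \<and> a \<in> cq_qalpha M then
       (if c = cq_cblank M then (if k = cq_qblank M \<and> a = cq_qblank M then 1 else 0)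
        else if c = cq_cblankbar M then (if k = a \<and> a \<noteq> cq_qblank M then 1 else 0)
        else 0)
     else 0)"

definition wf_cqtm :: "'q cqtm \<Rightarrow> bool" where
  "wf_cqtm M \<longleftrightarrow> finite (cq_states M) \<and> cq_start M \<in> cq_states M
     \<and> finite (cq_calpha M) \<and> cq_cblank M \<in> cq_calpha M \<and> cq_cblankbar M \<in> cq_calpha M
     \<and> cq_cblank M \<noteq> cq_cblankbar M
     \<and> finite (cq_qalpha M) \<and> cq_qblank M \<in> cq_qalpha M
     \<and> finite (cq_adm M) \<and> (\<forall>F\<in>cq_adm M. admissible (cq_calpha M) (cq_qalpha M) F)
     \<and> blank_test M \<in> cq_adm M
     \<and> (\<forall>q\<in>cq_states M. \<forall>\<tau>\<in>cq_calpha M. case cq_delta M q \<tau> of (p, D, F) \<Rightarrow>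
          p \<in> St ` cq_states M \<union> {Yes, No, Halt} \<and> F \<in> cq_adm M)"

definition is_mqtm :: "'q cqtm \<Rightarrow> bool" where
  "is_mqtm M \<longleftrightarrow> wf_cqtm M \<and> (\<forall>F\<in>cq_adm M. projective (cq_calpha M) (cq_qalpha M) F)"

text \<open>Quantum tape states: (unnormalised) vectors over the basis of tape configurations.\<close>
definition basis :: "(int \<Rightarrow> 'q) \<Rightarrow> (int \<Rightarrow> 'q) \<Rightarrow> complex" where
  "basis u = (\<lambda>v. if v = u then 1 else 0)"

definition apply_at :: "'q set \<Rightarrow> 'q mat \<Rightarrow> int \<Rightarrow> ((int \<Rightarrow> 'q) \<Rightarrow> complex) \<Rightarrow> (int \<Rightarrow> 'q) \<Rightarrow> complex" where
  "apply_at SQ A i \<psi> = (\<lambda>u. \<Sum>a\<in>SQ. A (u i) a * \<psi> (u(i := a)))"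

text \<open>Squared norm (reachable tape states are finite superpositions).\<close>
definition norm2 :: "((int \<Rightarrow> 'q) \<Rightarrow> complex) \<Rightarrow> real" where
  "norm2 \<psi> = (\<Sum>u\<in>{u. \<psi> u \<noteq> 0}. (cmod (\<psi> u))\<^sup>2)"

text \<open>Run along a sequence of outcomes (latest outcome first): classical configuration
  (state, last outcome, head position) and the unnormalised tape state, whose squared norm
  is the probability of that outcome sequence.\<close>
primrec cq_run :: "'q cqtm \<Rightarrow> 'q list \<Rightarrow> nat list \<Rightarrow> (nat st \<times> nat \<times> int) \<times> ((int \<Rightarrow> 'q) \<Rightarrow> complex)" where
  "cq_run M xs [] = ((St (cq_start M), cq_cblank M, 0), basis (init_tape (cq_qblank M) xs))"
| "cq_run M xs (c # ws) = (case cq_run M xs ws of ((q, \<tau>, h), \<psi>) \<Rightarrow>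
     (case q of
        St p \<Rightarrow> (case cq_delta M p \<tau> of (p', D, F) \<Rightarrow>
                   ((p', c, h + mv D), apply_at (cq_qalpha M) (F c) (h + mv D) \<psi>))
      | _ \<Rightarrow> ((q, \<tau>, h), \<psi>)))"

definition prob_running :: "'q cqtm \<Rightarrow> 'q list \<Rightarrow> nat \<Rightarrow> real" where
  "prob_running M xs t = (\<Sum>w\<in>{w. length w = t \<and> set w \<subseteq> cq_calpha M
        \<and> \<not> halted (fst (fst (cq_run M xs w)))}. norm2 (snd (cq_run M xs w)))"

text \<open>Expected running time E[T] = sum over t of P(T > t).\<close>
definition expected_time :: "'q cqtm \<Rightarrow> 'q list \<Rightarrow> ennreal" where
  "expected_time M xs = (\<Sum>t. ennreal (prob_running M xs t))"

definition cq_outputs :: "'q cqtm \<Rightarrow> 'q list \<Rightarrow> 'q tm_out \<Rightarrow> bool" where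
  "cq_outputs M xs out \<longleftrightarrow> (\<forall>w. set w \<subseteq> cq_calpha M \<longrightarrow>
     (case cq_run M xs w of ((q, \<tau>, h), \<psi>) \<Rightarrow>
        halted q \<and> norm2 \<psi> \<noteq> 0 \<longrightarrow>
        (case out of
           OYes \<Rightarrow> q = Yes
         | ONo \<Rightarrow> q = No
         | OTape ys \<Rightarrow> q = Halt \<and>
             (\<exists>c u. c \<noteq> 0 \<and> \<psi> = (\<lambda>v. if v = u then c else 0) \<and> trim (cq_qblank M) u = ys))))"

end

theory Submission
  imports Defs
begin

definition delt :: "'q \<Rightarrow> 'q \<Rightarrow> complex" where
  "delt a b = (if a = b then 1 else 0)"

definition two_meas :: "'q set \<Rightarrow> nat \<Rightarrow> nat \<Rightarrow> 'q mat \<Rightarrow> nat \<Rightarrow> 'q mat" where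
  "two_meas SQ c1 c2 P = (\<lambda>c k l. if k \<in> SQ \<and> l \<in> SQ then
      (if c = c1 then P k l else if c = c2 then delt k l - P k l else 0) else 0)"

lemma sum_delt_right:
  assumes "finite SQ" "b \<in> SQ"
  shows "(\<Sum>k\<in>SQ. g k * delt k b) = g b"
proof -
  have "(\<Sum>k\<in>SQ. g k * delt k b) = (\<Sum>k\<in>SQ. if k = b then g b else 0)"
    by (rule sum.cong) (auto simp: delt_def)
  also have "\<dots> = g b" using assms by (simp add: sum.delta')
  finally show ?thesis .
qed

lemma sum_delt_left:
  assumes "finite SQ" "a \<in> SQ"
  shows "(\<Sum>k\<in>SQ. delt a k * g k) = g a"
proof -
  have "(\<Sum>k\<in>SQ. delt a k * g k) = (\<Sum>k\<in>SQ. if a = k then g a else 0)"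
    by (rule sum.cong) (auto simp: delt_def)
  also have "\<dots> = g a" using assms by (simp add: sum.delta)
  finally show ?thesis .
qed

lemma two_meas_projective:
  assumes fin: "finite SQ" "finite SC" and c: "c1 \<in> SC" "c2 \<in> SC" "c1 \<noteq> c2"
    and sa: "\<forall>a\<in>SQ. \<forall>b\<in>SQ. P a b = cnj (P b a)"
    and idem: "\<forall>a\<in>SQ. \<forall>b\<in>SQ. (\<Sum>k\<in>SQ. P a k * P k b) = P a b"
  shows "projective SC SQ (two_meas SQ c1 c2 P)"
  unfolding projective_def
proof (intro conjI ballI)
  show "supported SC SQ (two_meas SQ c1 c2 P)"
    using c unfolding supported_def two_meas_def by auto
next
  fix c a b assume "c \<in> SC" "a \<in> SQ" "b \<in> SQ"
  then show "two_meas SQ c1 c2 P c a b = cnj (two_meas SQ c1 c2 P c b a)"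
  proof -
    have "P a b = cnj (P b a)" using sa \<open>a \<in> SQ\<close> \<open>b \<in> SQ\<close> by blast
    then show ?thesis by (auto simp: two_meas_def delt_def)
  qed
next
  fix a b assume ab: "a \<in> SQ" "b \<in> SQ"
  have "(\<Sum>c\<in>SC. two_meas SQ c1 c2 P c a b) = (\<Sum>c\<in>{c1,c2}. two_meas SQ c1 c2 P c a b)"
    by (rule sum.mono_neutral_right) (use fin c in \<open>auto simp: two_meas_def\<close>)
  also have "\<dots> = delt a b" using c ab by (simp add: two_meas_def)
  finally show "(\<Sum>c\<in>SC. two_meas SQ c1 c2 P c a b) = (if a = b then 1 else 0)"
    by (simp add: delt_def)
next
  fix c d a b assume cd: "c \<in> SC" "d \<in> SC" and ab: "a \<in> SQ" "b \<in> SQ"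
  let ?F = "two_meas SQ c1 c2 P"
  have e: "(\<Sum>k\<in>SQ. ?F c a k * ?F d k b) = (\<Sum>k\<in>SQ.
      (if c = c1 then P a k else if c = c2 then delt a k - P a k else 0) *
      (if d = c1 then P k b else if d = c2 then delt k b - P k b else 0))"
    by (rule sum.cong) (use ab in \<open>auto simp: two_meas_def\<close>)
  have s1: "(\<Sum>k\<in>SQ. P a k * (delt k b - P k b)) = 0"
    using idem ab fin by (simp add: right_diff_distrib sum_subtractf sum_delt_right)
  have s2: "(\<Sum>k\<in>SQ. (delt a k - P a k) * P k b) = 0"
    using idem ab fin by (simp add: left_diff_distrib sum_subtractf sum_delt_left)
  have s3: "(\<Sum>k\<in>SQ. (delt a k - P a k) * (delt k b - P k b)) = delt a b - P a b"
  proof -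
    have "(\<Sum>k\<in>SQ. (delt a k - P a k) * (delt k b - P k b)) =
       (\<Sum>k\<in>SQ. delt a k * (delt k b - P k b)) - (\<Sum>k\<in>SQ. P a k * (delt k b - P k b))"
      by (simp add: left_diff_distrib sum_subtractf)
    also have "\<dots> = delt a b - P a b" using s1 ab fin by (simp add: sum_delt_left)
    finally show ?thesis .
  qed
  show "(\<Sum>k\<in>SQ. ?F c a k * ?F d k b) = (if c = d then ?F c a b else 0)"
    unfolding e using c s1 s2 s3 idem ab
    by (cases "c = c1"; cases "c = c2"; cases "d = c1"; cases "d = c2") (auto simp: two_meas_def)
qed

lemma projective_admissible:
  assumes "projective SC SQ F" "finite SC"
  shows "admissible SC SQ F"
  unfolding admissible_def
proof (intro conjI ballI)
  show "supported SC SQ F" using assms unfolding projective_def by auto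
next
  fix a b assume ab: "a \<in> SQ" "b \<in> SQ"
  have sa: "\<And>c k. c \<in> SC \<Longrightarrow> k \<in> SQ \<Longrightarrow> cnj (F c k a) = F c a k"
  proof -
    fix c k assume "c \<in> SC" "k \<in> SQ"
    then have "F c a k = cnj (F c k a)" using assms(1) ab unfolding projective_def by blast
    then show "cnj (F c k a) = F c a k" by simp
  qed
  have pr: "\<And>c. c \<in> SC \<Longrightarrow> (\<Sum>k\<in>SQ. F c a k * F c k b) = F c a b"
    using assms(1) ab unfolding projective_def by (metis (no_types, lifting))
  have "(\<Sum>c\<in>SC. \<Sum>k\<in>SQ. cnj (F c k a) * F c k b) = (\<Sum>c\<in>SC. \<Sum>k\<in>SQ. F c a k * F c k b)"
    using sa by (intro sum.cong refl) auto
  also have "\<dots> = (\<Sum>c\<in>SC. F c a b)"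
    using pr by (intro sum.cong refl) auto
  also have "\<dots> = (if a = b then 1 else 0)"
    using assms(1) ab unfolding projective_def by blast
  finally show "(\<Sum>c\<in>SC. \<Sum>k\<in>SQ. cnj (F c k a) * F c k b) = (if a = b then 1 else 0)" .
qed

definition rmeas :: "'q set \<Rightarrow> ('q \<Rightarrow> nat) \<Rightarrow> nat \<Rightarrow> 'q mat" where
  "rmeas SQ cd = (\<lambda>c k l. if k \<in> SQ \<and> l = k \<and> c = cd k then 1 else 0)"

lemma rmeas_projective:
  assumes fin: "finite SQ" "finite SC" and cd: "\<forall>k\<in>SQ. cd k \<in> SC"
  shows "projective SC SQ (rmeas SQ cd)"
  unfolding projective_def
proof (intro conjI ballI)
  show "supported SC SQ (rmeas SQ cd)" using cd unfolding supported_def rmeas_def by auto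
next
  fix c a b assume "c \<in> SC" "a \<in> SQ" "b \<in> SQ"
  then show "rmeas SQ cd c a b = cnj (rmeas SQ cd c b a)" by (auto simp: rmeas_def)
next
  fix a b assume ab: "a \<in> SQ" "b \<in> SQ"
  have "(\<Sum>c\<in>SC. rmeas SQ cd c a b) = (\<Sum>c\<in>SC. if c = cd a then (if b = a then 1 else 0) else 0)"
    using ab by (intro sum.cong) (auto simp: rmeas_def)
  also have "\<dots> = (if a = b then 1 else 0)" using cd ab fin by (simp add: sum.delta')
  finally show "(\<Sum>c\<in>SC. rmeas SQ cd c a b) = (if a = b then 1 else 0)" .
next
  fix c d a b assume cd': "c \<in> SC" "d \<in> SC" and ab: "a \<in> SQ" "b \<in> SQ"
  have "(\<Sum>k\<in>SQ. rmeas SQ cd c a k * rmeas SQ cd d k b) =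
     (\<Sum>k\<in>SQ. if k = a then (if c = cd a \<and> b = a \<and> d = cd a then 1 else 0) else 0)"
    using ab by (intro sum.cong) (auto simp: rmeas_def)
  also have "\<dots> = (if c = d then rmeas SQ cd c a b else 0)"
    using ab fin by (auto simp: sum.delta' rmeas_def)
  finally show "(\<Sum>k\<in>SQ. rmeas SQ cd c a k * rmeas SQ cd d k b) = (if c = d then rmeas SQ cd c a b else 0)" .
qed

definition pw :: "'q \<Rightarrow> 'q \<Rightarrow> 'q mat" where
  "pw A B = (\<lambda>k l. if k \<in> {A, B} \<and> l \<in> {A, B} then 1/2 else 0)"

lemma pw_idem:
  assumes "finite SQ" "A \<in> SQ" "B \<in> SQ" "A \<noteq> B" "x \<in> SQ" "y \<in> SQ"
  shows "(\<Sum>k\<in>SQ. pw A B x k * pw A B k y) = pw A B x y"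
proof -
  have "(\<Sum>k\<in>SQ. pw A B x k * pw A B k y) = (\<Sum>k\<in>{A,B}. pw A B x k * pw A B k y)"
    by (rule sum.mono_neutral_right) (use assms in \<open>auto simp: pw_def\<close>)
  also have "\<dots> = pw A B x y" using assms by (auto simp: pw_def)
  finally show ?thesis .
qed

lemma pw_sa: "pw A B x y = cnj (pw A B y x)"
  by (auto simp: pw_def)

definition pb :: "'q \<Rightarrow> 'q mat" where
  "pb A = (\<lambda>k l. if k = A \<and> l = A then 1 else 0)"

lemma pb_idem:
  assumes "finite SQ" "A \<in> SQ" "x \<in> SQ" "y \<in> SQ"
  shows "(\<Sum>k\<in>SQ. pb A x k * pb A k y) = pb A x y"
proof -
  have "(\<Sum>k\<in>SQ. pb A x k * pb A k y) = (\<Sum>k\<in>SQ. if k = A then pb A x y else 0)"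
    by (rule sum.cong) (auto simp: pb_def)
  then show ?thesis using assms by (simp add: sum.delta')
qed

lemma pb_sa: "pb A x y = cnj (pb A y x)"
  by (auto simp: pb_def)

datatype ('s, 'a) ph = Start | Rd 's | Mid 's 'a | Chk 's 'a

definition phases :: "('s, 'a) tm \<Rightarrow> ('s, 'a) ph set" where
  "phases M = insert Start (Rd ` tm_states M \<union> (\<lambda>(p, a). Mid p a) ` (tm_states M \<times> tm_alpha M)
      \<union> (\<lambda>(p, a). Chk p a) ` (tm_states M \<times> tm_alpha M))"

definition bs :: "complex \<Rightarrow> (int \<Rightarrow> 'q) \<Rightarrow> (int \<Rightarrow> 'q) \<Rightarrow> complex" where
  "bs \<alpha> u = (\<lambda>v. if v = u then \<alpha> else 0)"

definition two :: "complex \<Rightarrow> (int \<Rightarrow> 'q) \<Rightarrow> complex \<Rightarrow> (int \<Rightarrow> 'q) \<Rightarrow> (int \<Rightarrow> 'q) \<Rightarrow> complex" where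
  "two \<alpha> u \<beta> u' = (\<lambda>v. bs \<alpha> u v + bs \<beta> u' v)"

locale sim =
  fixes M :: "('s, 'a) tm" and sym :: "'a \<Rightarrow> nat" and enc :: "('s, 'a) ph \<Rightarrow> nat"
  assumes wf: "wf_tm M" and sym_inj: "inj_on sym (tm_alpha M)" and enc_inj: "inj_on enc (phases M)"
begin

definition SQ :: "('a + nat) set" where "SQ = Inl ` tm_alpha M"
definition code :: "'a \<Rightarrow> nat" where "code a = 4 + sym a"
definition codeq :: "'a + nat \<Rightarrow> nat" where "codeq = case_sum code (\<lambda>_. 0)"
definition CC :: "nat set" where "CC = {0, 1, 2, 3} \<union> code ` tm_alpha M"
definition dsym :: "nat \<Rightarrow> 'a" where "dsym = inv_into (tm_alpha M) code"
definition Rm :: "nat \<Rightarrow> ('a + nat) mat" where "Rm = rmeas SQ codeq"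
definition W :: "'a \<Rightarrow> 'a \<Rightarrow> nat \<Rightarrow> ('a + nat) mat" where
  "W a b = (if a = b then Rm else two_meas SQ 2 3 (pw (Inl a) (Inl b)))"
definition BT :: "nat \<Rightarrow> ('a + nat) mat" where "BT = two_meas SQ 0 1 (pb (Inl (tm_blank M)))"
definition adm :: "(nat \<Rightarrow> ('a + nat) mat) set" where
  "adm = {BT, Rm} \<union> (\<lambda>(a, b). W a b) ` (tm_alpha M \<times> tm_alpha M)"
definition dec :: "nat \<Rightarrow> ('s, 'a) ph" where "dec = inv_into (phases M) enc"

fun stm :: "'s st \<Rightarrow> nat st" where
  "stm (St p) = St (enc (Rd p))" | "stm Yes = Yes" | "stm No = No" | "stm Halt = Halt"

fun dl :: "('s, 'a) ph \<Rightarrow> nat \<Rightarrow> nat st \<times> dir \<times> (nat \<Rightarrow> ('a + nat) mat)" where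
  "dl Start \<tau> = (St (enc (Rd (tm_start M))), Stay, Rm)"
| "dl (Rd p) \<tau> = (if \<tau> \<in> code ` tm_alpha M then
      (case tm_delta M p (dsym \<tau>) of (p', b, D) \<Rightarrow>
        if b = dsym \<tau> then (stm p', D, Rm) else (St (enc (Mid p (dsym \<tau>))), Stay, W (dsym \<tau>) b))
     else (Halt, Stay, Rm))"
| "dl (Mid p a) \<tau> = (St (enc (Chk p a)), Stay, Rm)"
| "dl (Chk p a) \<tau> = (case tm_delta M p a of (p', b, D) \<Rightarrow>
      if \<tau> = code b then (stm p', D, Rm) else (St (enc (Mid p a)), Stay, W a b))"

definition MQ :: "('a + nat) cqtm" where
  "MQ = \<lparr>cq_states = enc ` phases M, cq_calpha = CC, cq_cblank = 0, cq_cblankbar = 1,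
     cq_qalpha = SQ, cq_qblank = Inl (tm_blank M), cq_adm = adm, cq_start = enc Start,
     cq_delta = (\<lambda>n \<tau>. dl (dec n) \<tau>)\<rparr>"

lemma MQ_simps[simp]: "cq_states MQ = enc ` phases M" "cq_calpha MQ = CC" "cq_cblank MQ = 0"
  "cq_cblankbar MQ = 1" "cq_qalpha MQ = SQ" "cq_qblank MQ = Inl (tm_blank M)" "cq_adm MQ = adm"
  "cq_start MQ = enc Start" "cq_delta MQ = (\<lambda>n \<tau>. dl (dec n) \<tau>)"
  by (simp_all add: MQ_def)

lemma wf_parts: "finite (tm_states M)" "finite (tm_alpha M)" "tm_blank M \<in> tm_alpha M"
  "tm_start M \<in> tm_states M"
  "\<And>q a. q \<in> tm_states M \<Longrightarrow> a \<in> tm_alpha M \<Longrightarrow> fst (tm_delta M q a) \<in> St ` tm_states M \<union> {Yes, No, Halt}"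
  "\<And>q a. q \<in> tm_states M \<Longrightarrow> a \<in> tm_alpha M \<Longrightarrow> fst (snd (tm_delta M q a)) \<in> tm_alpha M"
proof -
  show "finite (tm_states M)" "finite (tm_alpha M)" "tm_blank M \<in> tm_alpha M" "tm_start M \<in> tm_states M"
    using wf unfolding wf_tm_def by auto
next
  fix q a assume qa: "q \<in> tm_states M" "a \<in> tm_alpha M"
  obtain p b D where d: "tm_delta M q a = (p, b, D)" by (cases "tm_delta M q a") auto
  have "case tm_delta M q a of (p, b, D) \<Rightarrow> p \<in> St ` tm_states M \<union> {Yes, No, Halt} \<and> b \<in> tm_alpha M"
  proof -
    have H: "\<forall>q\<in>tm_states M. \<forall>a\<in>tm_alpha M. case tm_delta M q a of (p, b, D) \<Rightarrow> p \<in> St ` tm_states M \<union> {Yes, No, Halt} \<and> b \<in> tm_alpha M"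
      using wf unfolding wf_tm_def by (elim conjE)
    show ?thesis using bspec[OF bspec[OF H qa(1)] qa(2)] .
  qed
  then show "fst (tm_delta M q a) \<in> St ` tm_states M \<union> {Yes, No, Halt}"
    "fst (snd (tm_delta M q a)) \<in> tm_alpha M" using d by auto
qed

lemma finite_phases: "finite (phases M)"
  using wf_parts unfolding phases_def by auto

lemma dec_enc[simp]: "\<phi> \<in> phases M \<Longrightarrow> dec (enc \<phi>) = \<phi>"
  unfolding dec_def using enc_inj by simp

lemma phases_mem[simp]: "Start \<in> phases M" "Rd p \<in> phases M \<longleftrightarrow> p \<in> tm_states M"
  "Mid p a \<in> phases M \<longleftrightarrow> p \<in> tm_states M \<and> a \<in> tm_alpha M"
  "Chk p a \<in> phases M \<longleftrightarrow> p \<in> tm_states M \<and> a \<in> tm_alpha M"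
  unfolding phases_def by auto

lemma code_inj: "inj_on code (tm_alpha M)"
  using sym_inj unfolding code_def inj_on_def by auto

lemma dsym_code[simp]: "a \<in> tm_alpha M \<Longrightarrow> dsym (code a) = a"
  unfolding dsym_def using code_inj by simp

lemma code_eq_iff: "a \<in> tm_alpha M \<Longrightarrow> b \<in> tm_alpha M \<Longrightarrow> code a = code b \<longleftrightarrow> a = b"
  using code_inj unfolding inj_on_def by auto

lemma code_ge: "code a \<ge> 4" unfolding code_def by simp

lemma finite_SQ: "finite SQ" unfolding SQ_def using wf_parts by simp
lemma finite_CC: "finite CC" unfolding CC_def using wf_parts by simp

lemma blank_test_MQ: "blank_test MQ = BT"
  unfolding blank_test_def BT_def two_meas_def pb_def delt_def by (intro ext) auto

lemma proj_BT: "projective CC SQ BT"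
  unfolding BT_def
  by (rule two_meas_projective) (use finite_SQ finite_CC wf_parts in \<open>auto simp: CC_def SQ_def intro: pb_sa pb_idem\<close>)

lemma proj_Rm: "projective CC SQ Rm"
  unfolding Rm_def
  by (rule rmeas_projective) (use finite_SQ finite_CC in \<open>auto simp: CC_def SQ_def codeq_def\<close>)

lemma proj_W: "a \<in> tm_alpha M \<Longrightarrow> b \<in> tm_alpha M \<Longrightarrow> projective CC SQ (W a b)"
proof (cases "a = b")
  case True then show ?thesis by (simp add: W_def proj_Rm)
next
  case False
  assume ab: "a \<in> tm_alpha M" "b \<in> tm_alpha M"
  have "W a b = two_meas SQ 2 3 (pw (Inl a) (Inl b))" using False by (simp add: W_def)
  moreover have "projective CC SQ (two_meas SQ 2 3 (pw (Inl a) (Inl b)))"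
    by (rule two_meas_projective) (use finite_SQ finite_CC ab False in \<open>auto simp: CC_def SQ_def intro: pw_sa pw_idem\<close>)
  ultimately show ?thesis by simp
qed

lemma proj_adm: "F \<in> adm \<Longrightarrow> projective CC SQ F"
  unfolding adm_def using proj_BT proj_Rm proj_W by auto

lemma stm_ok: "p' \<in> St ` tm_states M \<union> {Yes, No, Halt} \<Longrightarrow> stm p' \<in> St ` enc ` phases M \<union> {Yes, No, Halt}"
  by auto

lemma is_mqtm_MQ: "is_mqtm MQ"
  unfolding is_mqtm_def wf_cqtm_def
proof (intro conjI ballI)
  show "finite (cq_states MQ)" using finite_phases by simp
  have "finite ((\<lambda>(a, b). W a b) ` (tm_alpha M \<times> tm_alpha M))"
    using wf_parts by (intro finite_imageI) simp
  then show "finite (cq_adm MQ)" by (simp add: adm_def)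
  show "blank_test MQ \<in> cq_adm MQ" using blank_test_MQ by (simp add: adm_def)
  show "cq_qblank MQ \<in> cq_qalpha MQ" using wf_parts by (simp add: SQ_def)
  fix F assume "F \<in> cq_adm MQ"
  then show "admissible (cq_calpha MQ) (cq_qalpha MQ) F" "projective (cq_calpha MQ) (cq_qalpha MQ) F"
    using proj_adm projective_admissible finite_CC by auto
next
  fix q \<tau> assume q: "q \<in> cq_states MQ" and t: "\<tau> \<in> cq_calpha MQ"
  then obtain \<phi> where \<phi>: "\<phi> \<in> phases M" "q = enc \<phi>" by auto
  have RmA: "Rm \<in> adm" by (simp add: adm_def)
  have WA: "\<And>a b. a \<in> tm_alpha M \<Longrightarrow> b \<in> tm_alpha M \<Longrightarrow> W a b \<in> adm" by (auto simp: adm_def)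
  have "fst (dl \<phi> \<tau>) \<in> St ` cq_states MQ \<union> {Yes, No, Halt} \<and> snd (snd (dl \<phi> \<tau>)) \<in> cq_adm MQ"
  proof (cases \<phi>)
    case Start then show ?thesis using RmA wf_parts by simp
  next
    case (Rd p)
    with \<phi> have p: "p \<in> tm_states M" by simp
    show ?thesis
    proof (cases "\<tau> \<in> code ` tm_alpha M")
      case True
      then obtain a where a: "a \<in> tm_alpha M" "\<tau> = code a" by auto
      obtain p' b D where d: "tm_delta M p a = (p', b, D)" by (cases "tm_delta M p a") auto
      have "p' \<in> St ` tm_states M \<union> {Yes, No, Halt}" "b \<in> tm_alpha M"
        using wf_parts(5,6)[OF p a(1)] d by auto
      then show ?thesis using Rd a d p RmA WA[of a b] stm_ok[of p'] by auto
    next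
      case False then show ?thesis using Rd RmA by simp
    qed
  next
    case (Mid p a) then show ?thesis using \<phi> RmA by simp
  next
    case (Chk p a)
    with \<phi> have p: "p \<in> tm_states M" "a \<in> tm_alpha M" by auto
    obtain p' b D where d: "tm_delta M p a = (p', b, D)" by (cases "tm_delta M p a") auto
    have "p' \<in> St ` tm_states M \<union> {Yes, No, Halt}" "b \<in> tm_alpha M"
      using wf_parts(5,6)[OF p] d by auto
    then show ?thesis using Chk d p RmA WA[of a b] stm_ok[of p'] by auto
  qed
  then show "case cq_delta MQ q \<tau> of (p, D, F) \<Rightarrow> p \<in> St ` cq_states MQ \<union> {Yes, No, Halt} \<and> F \<in> cq_adm MQ"
    using \<phi> by (auto split: prod.splits)
qed (use wf_parts finite_SQ finite_CC in \<open>auto simp: CC_def\<close>)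

end

lemma apply_at_zero: "apply_at SQ A i (\<lambda>_. 0) = (\<lambda>_. 0)"
  unfolding apply_at_def by simp

lemma apply_at_bs:
  assumes "u i \<in> SQ" "finite SQ"
  shows "apply_at SQ A i (bs \<alpha> u) = (\<lambda>v. if v(i := u i) = u then A (v i) (u i) * \<alpha> else 0)"
proof (rule ext)
  fix v
  have "apply_at SQ A i (bs \<alpha> u) v = (\<Sum>a\<in>SQ. if a = u i then (if v(i := u i) = u then A (v i) (u i) * \<alpha> else 0) else 0)"
    unfolding apply_at_def bs_def
  proof (rule sum.cong)
    fix a assume "a \<in> SQ"
    show "A (v i) a * (if v(i := a) = u then \<alpha> else 0) = (if a = u i then (if v(i := u i) = u then A (v i) (u i) * \<alpha> else 0) else 0)"
    proof (cases "v(i := a) = u")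
      case True
      then have "a = u i" by (metis fun_upd_same)
      then show ?thesis using True by simp
    next
      case False then show ?thesis by auto
    qed
  qed simp
  also have "\<dots> = (if v(i := u i) = u then A (v i) (u i) * \<alpha> else 0)"
    using assms by (simp add: sum.delta')
  finally show "apply_at SQ A i (bs \<alpha> u) v = (if v(i := u i) = u then A (v i) (u i) * \<alpha> else 0)" .
qed

lemma apply_at_add:
  "apply_at SQ A i (\<lambda>v. f v + g v) = (\<lambda>v. apply_at SQ A i f v + apply_at SQ A i g v)"
  unfolding apply_at_def by (simp add: distrib_left sum.distrib)

lemma norm2_sub:
  assumes "finite F" "{u. \<psi> u \<noteq> 0} \<subseteq> F"
  shows "norm2 \<psi> = (\<Sum>u\<in>F. (cmod (\<psi> u))\<^sup>2)"
  unfolding norm2_def by (rule sum.mono_neutral_left) (use assms in auto)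

lemma norm2_zero[simp]: "norm2 (\<lambda>_. 0) = 0"
  unfolding norm2_def by simp

lemma norm2_bs[simp]: "norm2 (bs \<alpha> u) = (cmod \<alpha>)\<^sup>2"
  by (subst norm2_sub[of "{u}"]) (auto simp: bs_def)

lemma norm2_two:
  assumes "u \<noteq> u'"
  shows "norm2 (two \<alpha> u \<beta> u') = (cmod \<alpha>)\<^sup>2 + (cmod \<beta>)\<^sup>2"
  by (subst norm2_sub[of "{u, u'}"]) (use assms in \<open>auto simp: two_def bs_def\<close>)

lemma sum_single:
  assumes "finite A" "c0 \<in> A" "\<And>c. c \<in> A \<Longrightarrow> c \<noteq> c0 \<Longrightarrow> g c = 0"
  shows "sum g A = g c0"
proof -
  have "sum g A = sum g {c0}"
    by (rule sum.mono_neutral_right) (use assms in auto)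
  then show ?thesis by simp
qed

lemma sum_pair:
  assumes "finite A" "c0 \<in> A" "c1 \<in> A" "c0 \<noteq> c1" "\<And>c. c \<in> A \<Longrightarrow> c \<noteq> c0 \<Longrightarrow> c \<noteq> c1 \<Longrightarrow> g c = 0"
  shows "sum g A = g c0 + g c1"
proof -
  have "sum g A = sum g {c0, c1}"
    by (rule sum.mono_neutral_right) (use assms in auto)
  then show ?thesis using assms by simp
qed

lemma init_tape_Inl: "init_tape (Inl b) (map Inl x) = Inl \<circ> init_tape b x"
  unfolding init_tape_def by (auto simp: fun_eq_iff)

lemma basis_bs: "basis u = bs 1 u"
  unfolding basis_def bs_def by simp

lemma trim_Inl: "trim (Inl b) (Inl \<circ> t) = map Inl (trim b t)"
  unfolding trim_def by (simp add: Let_def)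

context sim begin

definition cP :: "'a list \<Rightarrow> nat \<Rightarrow> 's st" where "cP x k = fst (tm_conf M x k)"
definition ct :: "'a list \<Rightarrow> nat \<Rightarrow> int \<Rightarrow> 'a" where "ct x k = fst (snd (tm_conf M x k))"
definition ch :: "'a list \<Rightarrow> nat \<Rightarrow> int" where "ch x k = snd (snd (tm_conf M x k))"
definition TT :: "'a list \<Rightarrow> nat" where "TT x = (LEAST n. halted (cP x n))"

lemma conf_eta: "tm_conf M x k = (cP x k, ct x k, ch x k)"
  by (simp add: cP_def ct_def ch_def)

lemma conf_Suc: "tm_conf M x (Suc k) = tm_step M (tm_conf M x k)"
  by (simp add: tm_conf_def)

lemma conf_0: "cP x 0 = St (tm_start M)" "ct x 0 = init_tape (tm_blank M) x" "ch x 0 = 0"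
  by (simp_all add: cP_def ct_def ch_def tm_conf_def)

lemma step_St:
  assumes "cP x k = St p" "tm_delta M p (ct x k (ch x k)) = (p', b, D)"
  shows "cP x (Suc k) = p'" "ct x (Suc k) = (ct x k)(ch x k := b)" "ch x (Suc k) = ch x k + mv D"
proof -
  have "tm_conf M x (Suc k) = tm_step M (cP x k, ct x k, ch x k)" using conf_Suc conf_eta by simp
  also have "\<dots> = (p', (ct x k)(ch x k := b), ch x k + mv D)" using assms by simp
  finally have e: "tm_conf M x (Suc k) = (p', (ct x k)(ch x k := b), ch x k + mv D)" .
  show "cP x (Suc k) = p'" "ct x (Suc k) = (ct x k)(ch x k := b)" "ch x (Suc k) = ch x k + mv D"
    by (simp_all only: cP_def ct_def ch_def e fst_conv snd_conv)
qed

lemma step_halted: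
  assumes "halted (cP x k)"
  shows "tm_conf M x (Suc k) = tm_conf M x k"
proof -
  have "\<forall>p. cP x k \<noteq> St p" using assms by (simp add: halted_def)
  then show ?thesis using conf_Suc[of x k] by (cases "cP x k") (auto simp: conf_eta[of x k])
qed

lemma halted_stays:
  assumes "halted (cP x k)" shows "tm_conf M x (k + j) = tm_conf M x k"
proof (induction j)
  case (Suc j)
  have "halted (cP x (k + j))" using Suc assms by (simp add: cP_def)
  then show ?case using step_halted[of x "k + j"] Suc by simp
qed simp

lemma halted_stays':
  assumes "halted (cP x k)" "k \<le> k'" shows "tm_conf M x k' = tm_conf M x k"
  using halted_stays[OF assms(1), of "k' - k"] assms(2) by simp

lemma reach:
  assumes "valid_input M x"
  shows "(\<forall>p. cP x k = St p \<longrightarrow> p \<in> tm_states M) \<and> (\<forall>i. ct x k i \<in> tm_alpha M)"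
proof (induction k)
  case 0
  have "\<forall>i. init_tape (tm_blank M) x i \<in> tm_alpha M"
  proof
    fix i
    show "init_tape (tm_blank M) x i \<in> tm_alpha M"
    proof (cases "1 \<le> i \<and> i \<le> int (length x)")
      case True
      then have "nat (i - 1) < length x" by linarith
      then have "x ! nat (i - 1) \<in> set x" by simp
      then show ?thesis using True assms unfolding init_tape_def valid_input_def by auto
    next
      case False then show ?thesis using wf_parts unfolding init_tape_def by auto
    qed
  qed
  then show ?case using wf_parts by (simp add: conf_0)
next
  case (Suc k)
  show ?case
  proof (cases "halted (cP x k)")
    case True
    then show ?thesis using step_halted[OF True] Suc by (simp add: cP_def ct_def)
  next
    case False
    then obtain p where p: "cP x k = St p" by (auto simp: halted_def)
    obtain p' b D where d: "tm_delta M p (ct x k (ch x k)) = (p', b, D)" by (cases "tm_delta M p (ct x k (ch x k))") auto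
    have pk: "p \<in> tm_states M" and ak: "ct x k (ch x k) \<in> tm_alpha M" using Suc p by auto
    show ?thesis using wf_parts(5,6)[OF pk ak] d step_St[OF p d] Suc by auto
  qed
qed

lemma reachP: "valid_input M x \<Longrightarrow> cP x k = St p \<Longrightarrow> p \<in> tm_states M"
  using reach by blast
lemma reachT: "valid_input M x \<Longrightarrow> ct x k i \<in> tm_alpha M"
  using reach by blast

lemma TT_halted: "\<exists>n. halted (cP x n) \<Longrightarrow> halted (cP x (TT x))"
  unfolding TT_def by (rule LeastI_ex)

lemma less_TT: "\<exists>n. halted (cP x n) \<Longrightarrow> \<not> halted (cP x k) \<Longrightarrow> k < TT x"
proof (rule ccontr)
  assume h: "\<exists>n. halted (cP x n)" and nh: "\<not> halted (cP x k)" and "\<not> k < TT x"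
  then have "TT x \<le> k" by simp
  then have "tm_conf M x k = tm_conf M x (TT x)" by (rule halted_stays'[OF TT_halted[OF h]])
  then show False using nh TT_halted[OF h] by (simp add: cP_def)
qed

lemma TT_ge1: "\<exists>n. halted (cP x n) \<Longrightarrow> TT x \<ge> 1"
  using less_TT[of x 0] by (simp add: conf_0 halted_def)

end

context sim begin

lemma codeq_Inl[simp]: "codeq (Inl a) = code a" by (simp add: codeq_def)

lemma Rm_apply:
  assumes "u i \<in> SQ"
  shows "apply_at SQ (Rm c) i (bs \<alpha> u) = (if c = codeq (u i) then bs \<alpha> u else (\<lambda>_. 0))"
proof -
  have e: "apply_at SQ (Rm c) i (bs \<alpha> u) = (\<lambda>v. if v(i := u i) = u then Rm c (v i) (u i) * \<alpha> else 0)"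
    by (rule apply_at_bs) (use assms finite_SQ in auto)
  show ?thesis unfolding e
  proof (rule ext)
    fix v
    show "(if v(i := u i) = u then Rm c (v i) (u i) * \<alpha> else 0) = (if c = codeq (u i) then bs \<alpha> u else (\<lambda>_. 0)) v"
    proof (cases "v = u")
      case True then show ?thesis using assms by (simp add: Rm_def rmeas_def bs_def)
    next
      case False
      have "v(i := u i) = u \<Longrightarrow> v i \<noteq> u i" using False by (metis fun_upd_triv)
      then show ?thesis using False by (auto simp: Rm_def rmeas_def bs_def)
    qed
  qed
qed

lemma W_apply:
  assumes ab: "a \<in> tm_alpha M" "b \<in> tm_alpha M" "a \<noteq> b" and ui: "u i = Inl a"
  shows "apply_at SQ (W a b c) i (bs \<alpha> u) = (if c = 2 then two (\<alpha>/2) u (\<alpha>/2) (u(i := Inl b))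
     else if c = 3 then two (\<alpha>/2) u (-(\<alpha>/2)) (u(i := Inl b)) else (\<lambda>_. 0))"
proof -
  have Wd: "W a b = two_meas SQ 2 3 (pw (Inl a) (Inl b))" using ab by (simp add: W_def)
  have inSQ: "Inl a \<in> SQ" "Inl b \<in> SQ" using ab by (auto simp: SQ_def)
  have e: "apply_at SQ (W a b c) i (bs \<alpha> u) = (\<lambda>v. if v(i := u i) = u then W a b c (v i) (u i) * \<alpha> else 0)"
    by (rule apply_at_bs) (use ui inSQ finite_SQ in auto)
  let ?u' = "u(i := Inl b)"
  have uu': "u \<noteq> ?u'" using ui ab by (metis fun_upd_same sum.inject(1))
  show ?thesis unfolding e
  proof (rule ext)
    fix v
    consider "v = u" | "v = ?u'" | "v \<noteq> u" "v \<noteq> ?u'" by blast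
    then show "(if v(i := u i) = u then W a b c (v i) (u i) * \<alpha> else 0) =
      (if c = 2 then two (\<alpha>/2) u (\<alpha>/2) ?u' else if c = 3 then two (\<alpha>/2) u (-(\<alpha>/2)) ?u' else (\<lambda>_. 0)) v"
    proof cases
      case 1
      have "u(i := Inl a) = u" using ui by (simp add: fun_upd_idem)
      then show ?thesis using 1 ui inSQ uu'
        by (simp add: Wd two_meas_def pw_def delt_def two_def bs_def)
    next
      case 2
      have "v(i := u i) = u" using 2 ui by (simp add: fun_upd_idem)
      moreover have "v i = Inl b" using 2 by simp
      ultimately show ?thesis using ui inSQ uu' 2 ab
        by (simp add: Wd two_meas_def pw_def delt_def two_def bs_def)
    next
      case 3
      show ?thesis
      proof (cases "v(i := u i) = u")
        case True
        then have "v i \<noteq> Inl a" using 3 ui by (metis fun_upd_triv)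
        moreover have "v i \<noteq> Inl b" using 3 True by (metis fun_upd_upd fun_upd_triv)
        ultimately show ?thesis using True 3 ui
          by (simp add: Wd two_meas_def pw_def delt_def two_def bs_def)
      next
        case False
        then show ?thesis using 3 ui by (simp add: two_def bs_def)
      qed
    qed
  qed
qed

lemma Mid_apply:
  assumes ab: "a \<in> tm_alpha M" "b \<in> tm_alpha M" "a \<noteq> b" and ui: "u i = Inl a" "u' i = Inl b"
  shows "apply_at SQ (Rm c) i (two \<alpha> u \<beta> u') = (if c = code a then bs \<alpha> u else if c = code b then bs \<beta> u' else (\<lambda>_. 0))"
proof -
  have inSQ: "Inl a \<in> SQ" "Inl b \<in> SQ" using ab by (auto simp: SQ_def)
  have "apply_at SQ (Rm c) i (two \<alpha> u \<beta> u') = (\<lambda>v. apply_at SQ (Rm c) i (bs \<alpha> u) v + apply_at SQ (Rm c) i (bs \<beta> u') v)"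
    unfolding two_def by (rule apply_at_add)
  also have "\<dots> = (\<lambda>v. (if c = code a then bs \<alpha> u else (\<lambda>_. 0)) v + (if c = code b then bs \<beta> u' else (\<lambda>_. 0)) v)"
    using Rm_apply[of u i c \<alpha>] Rm_apply[of u' i c \<beta>] ui inSQ by simp
  also have "\<dots> = (if c = code a then bs \<alpha> u else if c = code b then bs \<beta> u' else (\<lambda>_. 0))"
    using code_eq_iff[OF ab(1,2)] ab(3) by (auto simp: fun_eq_iff)
  finally show ?thesis .
qed

definition nx :: "nat st \<Rightarrow> nat \<Rightarrow> int \<Rightarrow> ((int \<Rightarrow> 'a + nat) \<Rightarrow> complex) \<Rightarrow> nat \<Rightarrow> (nat st \<times> nat \<times> int) \<times> ((int \<Rightarrow> 'a + nat) \<Rightarrow> complex)" where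
  "nx q \<tau> h \<psi> c = (case q of St n \<Rightarrow> (case dl (dec n) \<tau> of (p', D, F) \<Rightarrow> ((p', c, h + mv D), apply_at SQ (F c) (h + mv D) \<psi>))
     | _ \<Rightarrow> ((q, \<tau>, h), \<psi>))"

lemma run_Cons: "cq_run MQ xs (c # w) = (case cq_run MQ xs w of ((q, \<tau>, h), \<psi>) \<Rightarrow> nx q \<tau> h \<psi> c)"
proof -
  obtain q \<tau> h \<psi> where e: "cq_run MQ xs w = ((q, \<tau>, h), \<psi>)" by (metis prod.collapse)
  show ?thesis by (cases q) (simp_all add: e nx_def)
qed

lemma nx_halted: "halted q \<Longrightarrow> nx q \<tau> h \<psi> c = ((q, \<tau>, h), \<psi>)"
  by (cases q) (auto simp: nx_def halted_def)

lemma nx_St: "dl (dec n) \<tau> = (p', D, F) \<Longrightarrow> nx (St n) \<tau> h \<psi> c = ((p', c, h + mv D), apply_at SQ (F c) (h + mv D) \<psi>)"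
  by (simp add: nx_def)

lemma nx_zero: "snd (nx q \<tau> h (\<lambda>_. 0) c) = (\<lambda>_. 0)"
  by (cases q) (auto simp: nx_def apply_at_zero split: prod.splits)

lemma halted_stm[simp]: "halted (stm P) \<longleftrightarrow> halted P"
  by (cases P) (auto simp: halted_def)

fun cmp :: "nat st \<Rightarrow> nat \<Rightarrow> nat" where
  "cmp (St n) \<tau> = (case dec n of
      Rd p \<Rightarrow> (if \<tau> \<in> code ` tm_alpha M \<and> fst (snd (tm_delta M p (dsym \<tau>))) = dsym \<tau> then 1 else 0)
    | Chk p a \<Rightarrow> (if \<tau> = code (fst (snd (tm_delta M p a))) then 1 else 0)
    | _ \<Rightarrow> 0)"
| "cmp _ \<tau> = 0"

fun kc :: "'a list \<Rightarrow> nat list \<Rightarrow> nat" where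
  "kc x [] = 0"
| "kc x (c # w) = kc x w + (case cq_run MQ (map Inl x) w of ((q, \<tau>, h), \<psi>) \<Rightarrow> cmp q \<tau>)"

fun Phi :: "nat \<Rightarrow> nat st \<Rightarrow> nat \<Rightarrow> nat \<Rightarrow> nat" where
  "Phi T (St n) \<tau> k = (case dec n of
      Start \<Rightarrow> 1 + 5 * T
    | Rd p \<Rightarrow> 5 * (T - k)
    | Mid p a \<Rightarrow> 5 * (T - k) - 1
    | Chk p a \<Rightarrow> (if \<tau> = code (fst (snd (tm_delta M p a))) then 5 * (T - k) - 4 else 5 * (T - k)))"
| "Phi T _ \<tau> k = 0"

definition InvC :: "'a list \<Rightarrow> nat \<Rightarrow> nat st \<Rightarrow> nat \<Rightarrow> int \<Rightarrow> ((int \<Rightarrow> 'a + nat) \<Rightarrow> complex) \<Rightarrow> bool" where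
  "InvC x k q \<tau> h \<psi> \<longleftrightarrow> \<psi> = (\<lambda>_. 0)
   \<or> (k = 0 \<and> q = St (enc Start) \<and> h = 0 \<and> \<psi> = bs 1 (Inl \<circ> ct x 0))
   \<or> (\<exists>\<alpha>. q = stm (cP x k) \<and> \<psi> = bs \<alpha> (Inl \<circ> ct x k)
        \<and> (\<not> halted (cP x k) \<longrightarrow> h = ch x k \<and> \<tau> = code (ct x k (ch x k))))
   \<or> (\<exists>\<alpha> p a b D p'. cP x k = St p \<and> h = ch x k \<and> ct x k h = a \<and> tm_delta M p a = (p', b, D) \<and> b \<noteq> a
        \<and> q = St (enc (Mid p a))
        \<and> ((\<tau> = 2 \<and> \<psi> = two \<alpha> (Inl \<circ> ct x k) \<alpha> ((Inl \<circ> ct x k)(h := Inl b)))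
          \<or> (\<tau> = 3 \<and> \<psi> = two \<alpha> (Inl \<circ> ct x k) (-\<alpha>) ((Inl \<circ> ct x k)(h := Inl b)))))
   \<or> (\<exists>\<alpha> p a b D p'. cP x k = St p \<and> h = ch x k \<and> ct x k h = a \<and> tm_delta M p a = (p', b, D) \<and> b \<noteq> a
        \<and> q = St (enc (Chk p a))
        \<and> ((\<tau> = code a \<and> \<psi> = bs \<alpha> (Inl \<circ> ct x k))
          \<or> (\<tau> = code b \<and> \<psi> = bs \<alpha> ((Inl \<circ> ct x k)(h := Inl b)))))"

definition InvP :: "'a list \<Rightarrow> nat \<Rightarrow> (nat st \<times> nat \<times> int) \<times> ((int \<Rightarrow> 'a + nat) \<Rightarrow> complex) \<Rightarrow> bool" where
  "InvP x k r = (case r of ((q, \<tau>, h), \<psi>) \<Rightarrow> InvC x k q \<tau> h \<psi>)"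

definition trm :: "nat \<Rightarrow> nat \<Rightarrow> (nat st \<times> nat \<times> int) \<times> ((int \<Rightarrow> 'a + nat) \<Rightarrow> complex) \<Rightarrow> real" where
  "trm T k r = (case r of ((q, \<tau>, h), \<psi>) \<Rightarrow> norm2 \<psi> * real (Phi T q \<tau> k))"

end

context sim begin

lemma norm2_nonneg: "norm2 \<psi> \<ge> 0"
  unfolding norm2_def by (rule sum_nonneg) simp

lemma case_move:
  assumes vi: "valid_input M x" and hl: "\<exists>n. halted (cP x n)"
    and P: "cP x k = St p" and hh: "h = ch x k"
    and q: "q = St (enc \<phi>)" and ph: "\<phi> \<in> phases M"
    and dl: "dl \<phi> \<tau> = (stm p', D, Rm)"
    and d: "tm_delta M p (ct x k h) = (p', b, D)"
    and \<psi>: "\<psi> = bs \<alpha> (Inl \<circ> ct x (Suc k))"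
  shows "\<forall>c. InvP x (Suc k) (nx q \<tau> h \<psi> c)"
    and "(\<Sum>c\<in>CC. trm (TT x) (Suc k) (nx q \<tau> h \<psi> c)) + norm2 \<psi> \<le> norm2 \<psi> * (5 * real (TT x - k) - 4)"
proof -
  have S: "cP x (Suc k) = p'" "ch x (Suc k) = h + mv D" using step_St[OF P d[unfolded hh]] hh by auto
  let ?u = "Inl \<circ> ct x (Suc k) :: int \<Rightarrow> 'a + nat"
  let ?h' = "h + mv D"
  let ?c0 = "code (ct x (Suc k) ?h')"
  have ui: "?u ?h' \<in> SQ" using reachT[OF vi] by (simp add: SQ_def)
  have nxe: "nx q \<tau> h \<psi> c = ((stm p', c, ?h'), if c = ?c0 then bs \<alpha> ?u else (\<lambda>_. 0))" for c
    using nx_St[of "enc \<phi>" \<tau> "stm p'" D Rm h \<psi> c] dl ph q \<psi> Rm_apply[where u="?u" and i="?h'" and c=c and \<alpha>=\<alpha>, OF ui] by simp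
  show "\<forall>c. InvP x (Suc k) (nx q \<tau> h \<psi> c)"
  proof
    fix c
    show "InvP x (Suc k) (nx q \<tau> h \<psi> c)"
    proof (cases "c = ?c0")
      case True
      then show ?thesis unfolding nxe InvP_def InvC_def using S by auto
    next
      case False then show ?thesis unfolding nxe InvP_def InvC_def by simp
    qed
  qed
  have nk: "\<not> halted (cP x k)" using P by (simp add: halted_def)
  have kT: "k < TT x" using less_TT[OF hl nk] .
  have phi_le: "real (Phi (TT x) (stm p') c (Suc k)) \<le> 5 * real (TT x - k) - 5" for c
  proof (cases p')
    case (St p'')
    have "p'' \<in> tm_states M" using reachP[OF vi] S St by simp
    moreover have "TT x - Suc k = (TT x - k) - 1" by simp
    ultimately show ?thesis using St kT by (simp add: of_nat_diff)
  qed (use kT in auto)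
  have "(\<Sum>c\<in>CC. trm (TT x) (Suc k) (nx q \<tau> h \<psi> c)) = trm (TT x) (Suc k) (nx q \<tau> h \<psi> ?c0)"
    by (rule sum_single) (use finite_CC reachT[OF vi] in \<open>auto simp: CC_def nxe trm_def\<close>)
  also have "\<dots> = norm2 \<psi> * real (Phi (TT x) (stm p') ?c0 (Suc k))" unfolding nxe trm_def by (simp add: \<psi>)
  also have "\<dots> \<le> norm2 \<psi> * (5 * real (TT x - k) - 5)"
    by (rule mult_left_mono[OF phi_le norm2_nonneg])
  finally show "(\<Sum>c\<in>CC. trm (TT x) (Suc k) (nx q \<tau> h \<psi> c)) + norm2 \<psi> \<le> norm2 \<psi> * (5 * real (TT x - k) - 4)"
    by (simp add: algebra_simps)
qed

lemma case_write:
  assumes vi: "valid_input M x" and hl: "\<exists>n. halted (cP x n)"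
    and P: "cP x k = St p" and hh: "h = ch x k"
    and q: "q = St (enc \<phi>)" and ph: "\<phi> \<in> phases M"
    and dl: "dl \<phi> \<tau> = (St (enc (Mid p a)), Stay, W a b)"
    and a: "ct x k h = a" and d: "tm_delta M p a = (p', b, D)" and ba: "b \<noteq> a"
    and \<psi>: "\<psi> = bs \<alpha> (Inl \<circ> ct x k)"
  shows "\<forall>c. InvP x k (nx q \<tau> h \<psi> c)"
    and "(\<Sum>c\<in>CC. trm (TT x) k (nx q \<tau> h \<psi> c)) + norm2 \<psi> \<le> norm2 \<psi> * (5 * real (TT x - k))"
proof -
  have pK: "p \<in> tm_states M" using reachP[OF vi P] .
  have aS: "a \<in> tm_alpha M" using reachT[OF vi] a by blast
  have bS: "b \<in> tm_alpha M" using wf_parts(6)[OF pK aS] d by simp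
  let ?u = "Inl \<circ> ct x k :: int \<Rightarrow> 'a + nat"
  let ?u' = "?u(h := Inl b)"
  have ui: "?u h = Inl a" using a by simp
  have uu': "?u \<noteq> ?u'" using ui ba by (metis fun_upd_same sum.inject(1))
  have midK: "Mid p a \<in> phases M" using pK aS by simp
  have nxe: "nx q \<tau> h \<psi> c = ((St (enc (Mid p a)), c, h), if c = 2 then two (\<alpha>/2) ?u (\<alpha>/2) ?u'
     else if c = 3 then two (\<alpha>/2) ?u (-(\<alpha>/2)) ?u' else (\<lambda>_. 0))" for c
    using nx_St[of "enc \<phi>" \<tau> "St (enc (Mid p a))" Stay "W a b" h \<psi> c] dl ph q \<psi>
      W_apply[where u="?u" and i=h and c=c and \<alpha>=\<alpha>, OF aS bS ba[symmetric] ui] by simp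
  show "\<forall>c. InvP x k (nx q \<tau> h \<psi> c)"
  proof
    fix c
    show "InvP x k (nx q \<tau> h \<psi> c)"
    proof -
      consider "c = 2" | "c = 3" | "c \<noteq> 2" "c \<noteq> 3" by blast
      then show ?thesis
      proof cases
        case 1 then show ?thesis unfolding nxe InvP_def InvC_def using P hh a d ba by auto
      next
        case 2 then show ?thesis unfolding nxe InvP_def InvC_def using P hh a d ba by auto
      next
        case 3 then show ?thesis unfolding nxe InvP_def InvC_def by simp
      qed
    qed
  qed
  have nk: "\<not> halted (cP x k)" using P by (simp add: halted_def)
  have kT: "k < TT x" using less_TT[OF hl nk] .
  have phm: "real (Phi (TT x) (St (enc (Mid p a))) c k) = 5 * real (TT x - k) - 1" for c
    using midK kT by (simp add: of_nat_diff)
  have n2: "norm2 (two (\<alpha>/2) ?u (\<alpha>/2) ?u') = (cmod \<alpha>)\<^sup>2 / 2" "norm2 (two (\<alpha>/2) ?u (-(\<alpha>/2)) ?u') = (cmod \<alpha>)\<^sup>2 / 2"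
    using norm2_two[OF uu', where \<alpha>="\<alpha>/2" and \<beta>="\<alpha>/2"] norm2_two[OF uu', where \<alpha>="\<alpha>/2" and \<beta>="-(\<alpha>/2)"]
    by (simp_all add: norm_divide power_divide)
  have "(\<Sum>c\<in>CC. trm (TT x) k (nx q \<tau> h \<psi> c)) = trm (TT x) k (nx q \<tau> h \<psi> 2) + trm (TT x) k (nx q \<tau> h \<psi> 3)"
    by (rule sum_pair) (use finite_CC in \<open>auto simp: CC_def nxe trm_def\<close>)
  also have "\<dots> = (cmod \<alpha>)\<^sup>2 * (5 * real (TT x - k) - 1)"
  proof -
    have t2: "trm (TT x) k (nx q \<tau> h \<psi> 2) = (cmod \<alpha>)\<^sup>2 / 2 * (5 * real (TT x - k) - 1)"
    proof -
      have "trm (TT x) k (nx q \<tau> h \<psi> 2) = norm2 (two (\<alpha>/2) ?u (\<alpha>/2) ?u') * real (Phi (TT x) (St (enc (Mid p a))) 2 k)"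
        unfolding nxe trm_def by simp
      also have "\<dots> = (cmod \<alpha>)\<^sup>2 / 2 * (5 * real (TT x - k) - 1)" by (simp only: n2 phm)
      finally show ?thesis .
    qed
    have t3: "trm (TT x) k (nx q \<tau> h \<psi> 3) = (cmod \<alpha>)\<^sup>2 / 2 * (5 * real (TT x - k) - 1)"
    proof -
      have "trm (TT x) k (nx q \<tau> h \<psi> 3) = norm2 (two (\<alpha>/2) ?u (-(\<alpha>/2)) ?u') * real (Phi (TT x) (St (enc (Mid p a))) 3 k)"
        unfolding nxe trm_def by simp
      also have "\<dots> = (cmod \<alpha>)\<^sup>2 / 2 * (5 * real (TT x - k) - 1)" by (simp only: n2 phm)
      finally show ?thesis .
    qed
    show ?thesis unfolding t2 t3 by (simp add: field_simps)
  qed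
  finally show "(\<Sum>c\<in>CC. trm (TT x) k (nx q \<tau> h \<psi> c)) + norm2 \<psi> \<le> norm2 \<psi> * (5 * real (TT x - k))"
    using \<psi> by (simp add: algebra_simps)
qed

lemma case_mid:
  assumes vi: "valid_input M x" and hl: "\<exists>n. halted (cP x n)"
    and P: "cP x k = St p" and hh: "h = ch x k"
    and a: "ct x k h = a" and d: "tm_delta M p a = (p', b, D)" and ba: "b \<noteq> a"
    and q: "q = St (enc (Mid p a))"
    and \<beta>: "\<beta> = \<alpha> \<or> \<beta> = -\<alpha>"
    and \<psi>: "\<psi> = two \<alpha> (Inl \<circ> ct x k) \<beta> ((Inl \<circ> ct x k)(h := Inl b))"
  shows "\<forall>c. InvP x k (nx q \<tau> h \<psi> c)"
    and "(\<Sum>c\<in>CC. trm (TT x) k (nx q \<tau> h \<psi> c)) + norm2 \<psi> \<le> norm2 \<psi> * real (Phi (TT x) q \<tau> k)"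
proof -
  have pK: "p \<in> tm_states M" using reachP[OF vi P] .
  have aS: "a \<in> tm_alpha M" using reachT[OF vi] a by blast
  have bS: "b \<in> tm_alpha M" using wf_parts(6)[OF pK aS] d by simp
  let ?u = "Inl \<circ> ct x k :: int \<Rightarrow> 'a + nat"
  let ?u' = "?u(h := Inl b)"
  have ui: "?u h = Inl a" "?u' h = Inl b" using a by simp_all
  have uu': "?u \<noteq> ?u'" using ui ba by (metis sum.inject(1))
  have midK: "Mid p a \<in> phases M" "Chk p a \<in> phases M" using pK aS by simp_all
  have cab: "code a \<noteq> code b" using code_eq_iff[OF aS bS] ba by simp
  have nxe: "nx q \<tau> h \<psi> c = ((St (enc (Chk p a)), c, h), if c = code a then bs \<alpha> ?u
     else if c = code b then bs \<beta> ?u' else (\<lambda>_. 0))" for c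
    using nx_St[of "enc (Mid p a)" \<tau> "St (enc (Chk p a))" Stay Rm h \<psi> c] midK q \<psi>
      Mid_apply[where u="?u" and u'="?u'" and i=h and c=c and \<alpha>=\<alpha> and \<beta>=\<beta>, OF aS bS ba[symmetric] ui] by simp
  show "\<forall>c. InvP x k (nx q \<tau> h \<psi> c)"
  proof
    fix c
    show "InvP x k (nx q \<tau> h \<psi> c)"
    proof -
      consider "c = code a" | "c = code b" | "c \<noteq> code a" "c \<noteq> code b" by blast
      then show ?thesis
      proof cases
        case 1 then show ?thesis unfolding nxe InvP_def InvC_def using P hh a d ba by auto
      next
        case 2 then show ?thesis unfolding nxe InvP_def InvC_def using P hh a d ba cab by auto
      next
        case 3 then show ?thesis unfolding nxe InvP_def InvC_def by simp
      qed
    qed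
  qed
  have nk: "\<not> halted (cP x k)" using P by (simp add: halted_def)
  have kT: "k < TT x" using less_TT[OF hl nk] .
  have cb: "cmod \<beta> = cmod \<alpha>" using \<beta> by auto
  have ph1: "real (Phi (TT x) (St (enc (Chk p a))) (code a) k) = 5 * real (TT x - k)"
    using midK cab d by simp
  have ph2: "real (Phi (TT x) (St (enc (Chk p a))) (code b) k) = 5 * real (TT x - k) - 4"
    using midK d kT by (simp add: of_nat_diff)
  have ph3: "real (Phi (TT x) q \<tau> k) = 5 * real (TT x - k) - 1"
    using midK kT q by (simp add: of_nat_diff)
  have "(\<Sum>c\<in>CC. trm (TT x) k (nx q \<tau> h \<psi> c)) = trm (TT x) k (nx q \<tau> h \<psi> (code a)) + trm (TT x) k (nx q \<tau> h \<psi> (code b))"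
    by (rule sum_pair) (use finite_CC aS bS cab in \<open>auto simp: CC_def nxe trm_def\<close>)
  also have "\<dots> = (cmod \<alpha>)\<^sup>2 * (5 * real (TT x - k)) + (cmod \<alpha>)\<^sup>2 * (5 * real (TT x - k) - 4)"
    unfolding nxe trm_def using ph1 ph2 cab cb by simp
  finally have S: "(\<Sum>c\<in>CC. trm (TT x) k (nx q \<tau> h \<psi> c)) = (cmod \<alpha>)\<^sup>2 * (5 * real (TT x - k)) + (cmod \<alpha>)\<^sup>2 * (5 * real (TT x - k) - 4)" .
  have n\<psi>: "norm2 \<psi> = 2 * (cmod \<alpha>)\<^sup>2" using \<psi> norm2_two[OF uu', where \<alpha>=\<alpha> and \<beta>=\<beta>] cb by simp
  have "(\<Sum>c\<in>CC. trm (TT x) k (nx q \<tau> h \<psi> c)) + norm2 \<psi> = norm2 \<psi> * real (Phi (TT x) q \<tau> k)"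
    unfolding ph3 S n\<psi> by (simp add: algebra_simps)
  then show "(\<Sum>c\<in>CC. trm (TT x) k (nx q \<tau> h \<psi> c)) + norm2 \<psi> \<le> norm2 \<psi> * real (Phi (TT x) q \<tau> k)" by simp
qed

end

context sim begin

lemma InvP_zero: "snd r = (\<lambda>_. 0) \<Longrightarrow> InvP x k r"
  by (cases r) (auto simp: InvP_def InvC_def)

lemma trm_zero: "snd r = (\<lambda>_. 0) \<Longrightarrow> trm T k r = 0"
  by (cases r) (auto simp: trm_def)

lemma Inl_comp_upd: "(Inl \<circ> f(h := b)) = (Inl \<circ> f)(h := Inl b)"
  by (auto simp: fun_eq_iff)

lemma main_step:
  assumes vi: "valid_input M x" and hl: "\<exists>n. halted (cP x n)" and I: "InvC x k q \<tau> h \<psi>"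
  shows "(\<forall>c. InvP x (k + cmp q \<tau>) (nx q \<tau> h \<psi> c)) \<and>
    (\<Sum>c\<in>CC. trm (TT x) (k + cmp q \<tau>) (nx q \<tau> h \<psi> c)) + (if halted q then 0 else norm2 \<psi>)
      \<le> norm2 \<psi> * real (Phi (TT x) q \<tau> k)"
proof -
  from I consider (Z) "\<psi> = (\<lambda>_. 0)"
    | (S) "k = 0" "q = St (enc Start)" "h = 0" "\<psi> = bs 1 (Inl \<circ> ct x 0)"
    | (R) \<alpha> where "q = stm (cP x k)" "\<psi> = bs \<alpha> (Inl \<circ> ct x k)"
        "\<not> halted (cP x k) \<longrightarrow> h = ch x k \<and> \<tau> = code (ct x k (ch x k))"
    | (Md) \<alpha> p a b D p' where "cP x k = St p" "h = ch x k" "ct x k h = a" "tm_delta M p a = (p', b, D)" "b \<noteq> a"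
        "q = St (enc (Mid p a))"
        "(\<tau> = 2 \<and> \<psi> = two \<alpha> (Inl \<circ> ct x k) \<alpha> ((Inl \<circ> ct x k)(h := Inl b)))
          \<or> (\<tau> = 3 \<and> \<psi> = two \<alpha> (Inl \<circ> ct x k) (-\<alpha>) ((Inl \<circ> ct x k)(h := Inl b)))"
    | (Ck) \<alpha> p a b D p' where "cP x k = St p" "h = ch x k" "ct x k h = a" "tm_delta M p a = (p', b, D)" "b \<noteq> a"
        "q = St (enc (Chk p a))"
        "(\<tau> = code a \<and> \<psi> = bs \<alpha> (Inl \<circ> ct x k)) \<or> (\<tau> = code b \<and> \<psi> = bs \<alpha> ((Inl \<circ> ct x k)(h := Inl b)))"
    unfolding InvC_def by blast
  then show ?thesis
  proof cases
    case Z
    have "snd (nx q \<tau> h \<psi> c) = (\<lambda>_. 0)" for c using Z nx_zero by simp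
    then show ?thesis using Z InvP_zero trm_zero by simp
  next
    case S
    have Sq: "St (enc (Rd (tm_start M))) = stm (cP x 0)" by (simp add: conf_0)
    let ?u = "Inl \<circ> ct x 0 :: int \<Rightarrow> 'a + nat"
    have u0: "?u 0 = Inl (tm_blank M)" by (simp add: conf_0 init_tape_def)
    have ui: "?u 0 \<in> SQ" using u0 wf_parts by (simp add: SQ_def)
    have nxe: "nx q \<tau> h \<psi> c = ((stm (cP x 0), c, 0), if c = code (tm_blank M) then bs 1 ?u else (\<lambda>_. 0))" for c
      using nx_St[of "enc Start" \<tau> "St (enc (Rd (tm_start M)))" Stay Rm h \<psi> c] S Sq
        Rm_apply[where u="?u" and i=0 and c=c and \<alpha>=1, OF ui] u0 by simp
    have cmp0: "cmp q \<tau> = 0" using S by simp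
    have kk: "k + cmp q \<tau> = 0" using S cmp0 by simp
    have A: "\<forall>c. InvP x (k + cmp q \<tau>) (nx q \<tau> h \<psi> c)"
    proof
      fix c
      show "InvP x (k + cmp q \<tau>) (nx q \<tau> h \<psi> c)"
        using S cmp0 u0 unfolding nxe InvP_def InvC_def by (auto simp: conf_0 init_tape_def)
    qed
    have "(\<Sum>c\<in>CC. trm (TT x) (k + cmp q \<tau>) (nx q \<tau> h \<psi> c)) = trm (TT x) 0 (nx q \<tau> h \<psi> (code (tm_blank M)))"
      unfolding kk by (rule sum_single) (use finite_CC wf_parts in \<open>auto simp: CC_def nxe trm_def\<close>)
    also have "\<dots> = 5 * real (TT x)" unfolding nxe trm_def using wf_parts by (simp add: conf_0)
    finally show ?thesis using A S cmp0 by (simp add: halted_def)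
  next
    case R
    show ?thesis
    proof (cases "halted (cP x k)")
      case True
      then have hq: "halted q" using R by simp
      have nq: "\<forall>n. q \<noteq> St n" using hq by (simp add: halted_def)
      have c0: "cmp q \<tau> = 0" "Phi T q \<tau> k' = 0" for T k' using nq by (cases q; simp)+
      have "InvP x k (nx q \<tau> h \<psi> c)" for c using I nx_halted[OF hq] by (simp add: InvP_def)
      moreover have "trm (TT x) k (nx q \<tau> h \<psi> c) = 0" for c using nx_halted[OF hq] c0 by (simp add: trm_def)
      ultimately show ?thesis using c0 hq by simp
    next
      case False
      then obtain p where P: "cP x k = St p" by (auto simp: halted_def)
      have hh: "h = ch x k" and tt: "\<tau> = code (ct x k (ch x k))" using R False by auto
      define a where "a = ct x k h"
      have pK: "p \<in> tm_states M" using reachP[OF vi P] .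
      have aS: "a \<in> tm_alpha M" using reachT[OF vi] a_def by blast
      obtain p' b D where d: "tm_delta M p a = (p', b, D)" by (cases "tm_delta M p a") auto
      have q: "q = St (enc (Rd p))" using R P by simp
      have ta: "\<tau> = code a" using tt hh a_def by simp
      have kT: "k < TT x" using less_TT[OF hl False] .
      have PhiR: "real (Phi (TT x) q \<tau> k) = 5 * real (TT x - k)" using q pK by simp
      show ?thesis
      proof (cases "b = a")
        case True
        have dl: "dl (Rd p) \<tau> = (stm p', D, Rm)" using ta aS d True by simp
        have cmp1: "cmp q \<tau> = 1" using q pK ta aS d True by simp
        have ct': "ct x (Suc k) = ct x k" using step_St(2)[OF P d[unfolded a_def hh]] True a_def hh by simp
        have \<psi>: "\<psi> = bs \<alpha> (Inl \<circ> ct x (Suc k))" using R ct' by simp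
        note cm = case_move[OF vi hl P hh q _ dl d[unfolded a_def] \<psi>]
        have le: "norm2 \<psi> * (5 * real (TT x - k) - 4) \<le> norm2 \<psi> * real (Phi (TT x) q \<tau> k)"
          unfolding PhiR by (rule mult_left_mono) (auto simp: norm2_nonneg)
        show ?thesis using cm(1) order_trans[OF cm(2) le] pK cmp1 False R by simp
      next
        case False
        have dl: "dl (Rd p) \<tau> = (St (enc (Mid p a)), Stay, W a b)" using ta aS d False by simp
        have cmp0: "cmp q \<tau> = 0" using q pK ta aS d False by simp
        note cw = case_write[OF vi hl P hh q _ dl a_def[symmetric] d False R(2)]
        show ?thesis using cw pK cmp0 PhiR \<open>\<not> halted (cP x k)\<close> R by simp
      qed
    qed
  next
    case Md
    have nh: "\<not> halted q" using Md by (simp add: halted_def)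
    have pK: "p \<in> tm_states M" using reachP[OF vi Md(1)] .
    have aS: "a \<in> tm_alpha M" using reachT[OF vi] Md(3) by blast
    have cmp0: "cmp q \<tau> = 0" using Md pK aS by simp
    obtain \<beta> where \<beta>: "\<beta> = \<alpha> \<or> \<beta> = -\<alpha>" "\<psi> = two \<alpha> (Inl \<circ> ct x k) \<beta> ((Inl \<circ> ct x k)(h := Inl b))"
      using Md(7) by blast
    note cm = case_mid[OF vi hl Md(1-6) \<beta>]
    show ?thesis using cm cmp0 nh by simp
  next
    case Ck
    have nh: "\<not> halted q" using Ck by (simp add: halted_def)
    have nk: "\<not> halted (cP x k)" using Ck by (simp add: halted_def)
    have kT: "k < TT x" using less_TT[OF hl nk] .
    have pK: "p \<in> tm_states M" using reachP[OF vi Ck(1)] .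
    have aS: "a \<in> tm_alpha M" using reachT[OF vi] Ck(3) by blast
    have bS: "b \<in> tm_alpha M" using wf_parts(6)[OF pK aS] Ck(4) by simp
    have cab: "code a \<noteq> code b" using code_eq_iff[OF aS bS] Ck(5) by simp
    have ph: "Chk p a \<in> phases M" using pK aS by simp
    from Ck(7) show ?thesis
    proof
      assume A: "\<tau> = code a \<and> \<psi> = bs \<alpha> (Inl \<circ> ct x k)"
      have dl: "dl (Chk p a) \<tau> = (St (enc (Mid p a)), Stay, W a b)" using A cab Ck(4) by simp
      have cmp0: "cmp q \<tau> = 0" using Ck(6) ph A cab Ck(4) by simp
      have PhiC: "real (Phi (TT x) q \<tau> k) = 5 * real (TT x - k)" using Ck(6) ph A cab Ck(4) by simp
      note cw = case_write[OF vi hl Ck(1,2,6) ph dl Ck(3,4,5)] A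
      show ?thesis using cw cmp0 PhiC nh by simp
    next
      assume A: "\<tau> = code b \<and> \<psi> = bs \<alpha> ((Inl \<circ> ct x k)(h := Inl b))"
      have dl: "dl (Chk p a) \<tau> = (stm p', D, Rm)" using A Ck(4) by simp
      have cmp1: "cmp q \<tau> = 1" using Ck(6) ph A Ck(4) by simp
      have PhiC: "real (Phi (TT x) q \<tau> k) = 5 * real (TT x - k) - 4" using Ck(6) ph A Ck(4) kT by (simp add: of_nat_diff)
      have ct': "ct x (Suc k) = (ct x k)(h := b)" using step_St(2)[OF Ck(1), of p' b D] Ck(2,3,4) by simp
      have \<psi>: "\<psi> = bs \<alpha> (Inl \<circ> ct x (Suc k))" using A ct' by (simp add: Inl_comp_upd)
      note cm = case_move[OF vi hl Ck(1,2,6) ph dl _ \<psi>] 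
      show ?thesis using cm[of b] Ck(3,4) cmp1 PhiC nh by simp
    qed
  qed
qed

end

context sim begin

lemma Inv_run:
  assumes vi: "valid_input M x" and hl: "\<exists>n. halted (cP x n)"
  shows "InvP x (kc x w) (cq_run MQ (map Inl x) w)"
proof (induction w)
  case Nil
  have "basis (init_tape (Inl (tm_blank M)) (map Inl x)) = bs 1 (Inl \<circ> ct x 0 :: int \<Rightarrow> 'a + nat)"
    by (simp add: init_tape_Inl basis_bs conf_0)
  then show ?case by (simp add: InvP_def InvC_def)
next
  case (Cons c w)
  obtain q \<tau> h \<psi> where e: "cq_run MQ (map Inl x) w = ((q, \<tau>, h), \<psi>)" by (metis prod.collapse)
  then have "InvC x (kc x w) q \<tau> h \<psi>" using Cons by (simp add: InvP_def)
  then show ?case using main_step[OF vi hl] e by (simp add: run_Cons del: cq_run.simps)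
qed

definition words :: "nat \<Rightarrow> nat list set" where "words t = {w. length w = t \<and> set w \<subseteq> CC}"

lemma finite_words: "finite (words t)"
proof -
  have "words t = {xs. set xs \<subseteq> CC \<and> length xs = t}" unfolding words_def by auto
  then show ?thesis using finite_lists_length_eq[OF finite_CC] by simp
qed

lemma words_Suc: "words (Suc t) = (\<lambda>(w, c). c # w) ` (words t \<times> CC)"
  unfolding words_def by (auto simp: length_Suc_conv image_iff)

lemma inj_cons: "inj_on (\<lambda>(w, c). c # w) X"
  by (auto simp: inj_on_def)

definition Vt :: "'a list \<Rightarrow> nat \<Rightarrow> real" where
  "Vt x t = (\<Sum>w\<in>words t. trm (TT x) (kc x w) (cq_run MQ (map Inl x) w))"

definition Sr :: "'a list \<Rightarrow> nat \<Rightarrow> real" where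
  "Sr x t = (\<Sum>w\<in>words t. if halted (fst (fst (cq_run MQ (map Inl x) w))) then 0 else norm2 (snd (cq_run MQ (map Inl x) w)))"

lemma V_step:
  assumes vi: "valid_input M x" and hl: "\<exists>n. halted (cP x n)"
  shows "Vt x (Suc t) + Sr x t \<le> Vt x t"
proof -
  let ?R = "cq_run MQ (map Inl x)"
  have "Vt x (Suc t) = (\<Sum>(w, c)\<in>words t \<times> CC. trm (TT x) (kc x (c # w)) (?R (c # w)))"
    unfolding Vt_def words_Suc by (subst sum.reindex[OF inj_cons]) (simp add: case_prod_beta)
  also have "\<dots> = (\<Sum>w\<in>words t. \<Sum>c\<in>CC. trm (TT x) (kc x (c # w)) (?R (c # w)))"
    by (rule sum.cartesian_product[symmetric])
  finally have e1: "Vt x (Suc t) = \<dots>" .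
  have "Vt x (Suc t) + Sr x t = (\<Sum>w\<in>words t. (\<Sum>c\<in>CC. trm (TT x) (kc x (c # w)) (?R (c # w)))
      + (if halted (fst (fst (?R w))) then 0 else norm2 (snd (?R w))))"
    unfolding e1 Sr_def by (simp add: sum.distrib)
  also have "\<dots> \<le> (\<Sum>w\<in>words t. trm (TT x) (kc x w) (?R w))"
  proof (rule sum_mono)
    fix w assume "w \<in> words t"
    obtain q \<tau> h \<psi> where e: "?R w = ((q, \<tau>, h), \<psi>)" by (metis prod.collapse)
    have I: "InvC x (kc x w) q \<tau> h \<psi>" using Inv_run[OF vi hl, of w] e by (simp add: InvP_def)
    show "(\<Sum>c\<in>CC. trm (TT x) (kc x (c # w)) (?R (c # w))) + (if halted (fst (fst (?R w))) then 0 else norm2 (snd (?R w)))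
        \<le> trm (TT x) (kc x w) (?R w)"
      using conjunct2[OF main_step[OF vi hl I]] e by (cases "halted q") (simp_all add: run_Cons trm_def del: cq_run.simps)
  qed
  finally show ?thesis unfolding Vt_def .
qed

lemma trm_nonneg: "trm T k r \<ge> 0"
  by (cases r) (auto simp: trm_def norm2_nonneg)

lemma V_sum:
  assumes vi: "valid_input M x" and hl: "\<exists>n. halted (cP x n)"
  shows "(\<Sum>t<n. Sr x t) + Vt x n \<le> Vt x 0"
proof (induction n)
  case (Suc n)
  then show ?case using V_step[OF vi hl, of n] by simp
qed simp

lemma V0: "Vt x 0 = 1 + 5 * real (TT x)"
proof -
  have "words 0 = {[]}" unfolding words_def by auto
  then show ?thesis unfolding Vt_def by (simp add: trm_def basis_bs)
qed

lemma Sr_prob: "prob_running MQ (map Inl x) t = Sr x t"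
proof -
  have "{w. length w = t \<and> set w \<subseteq> cq_calpha MQ \<and> \<not> halted (fst (fst (cq_run MQ (map Inl x) w)))}
      = {w \<in> words t. \<not> halted (fst (fst (cq_run MQ (map Inl x) w)))}" unfolding words_def by auto
  then have "prob_running MQ (map Inl x) t = (\<Sum>w\<in>words t. if \<not> halted (fst (fst (cq_run MQ (map Inl x) w))) then norm2 (snd (cq_run MQ (map Inl x) w)) else 0)"
    unfolding prob_running_def by (simp add: sum.inter_filter[OF finite_words])
  also have "\<dots> = Sr x t" unfolding Sr_def by (rule sum.cong) auto
  finally show ?thesis .
qed

lemma expected_bound:
  assumes vi: "valid_input M x" and hl: "\<exists>n. halted (cP x n)"
  shows "expected_time MQ (map Inl x) \<le> ennreal (1 + 5 * real (TT x))"
proof -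
  have Sr_nn: "Sr x t \<ge> 0" for t unfolding Sr_def by (rule sum_nonneg) (auto simp: norm2_nonneg)
  have Vn: "Vt x n \<ge> 0" for n unfolding Vt_def by (rule sum_nonneg) (simp add: trm_nonneg)
  have ps: "(\<Sum>t<n. Sr x t) \<le> 1 + 5 * real (TT x)" for n
    using V_sum[OF vi hl, of n] Vn[of n] V0[of x] by simp
  have "expected_time MQ (map Inl x) = (SUP n. \<Sum>t<n. ennreal (Sr x t))"
    unfolding expected_time_def Sr_prob by (rule suminf_eq_SUP)
  also have "\<dots> \<le> ennreal (1 + 5 * real (TT x))"
  proof (rule SUP_least)
    fix n
    have eq: "(\<Sum>t<n. ennreal (Sr x t)) = ennreal (\<Sum>t<n. Sr x t)" using Sr_nn by (simp add: sum_ennreal)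
    show "(\<Sum>t<n. ennreal (Sr x t)) \<le> ennreal (1 + 5 * real (TT x))" by (subst eq) (rule ennreal_leI[OF ps])
  qed
  finally show ?thesis .
qed

lemma outputs:
  assumes vi: "valid_input M x" and hl: "\<exists>n. halted (cP x n)"
  shows "cq_outputs MQ (map Inl x) (map_tm_out Inl (tm_output M x))"
  unfolding cq_outputs_def
proof (intro allI impI)
  fix w
  obtain q \<tau> h \<psi> where e: "cq_run MQ (map Inl x) w = ((q, \<tau>, h), \<psi>)" by (metis prod.collapse)
  define k where "k = kc x w"
  have I: "InvC x k q \<tau> h \<psi>" using Inv_run[OF vi hl, of w] e by (simp add: InvP_def k_def)
  show "case cq_run MQ (map Inl x) w of ((q, \<tau>, h), \<psi>) \<Rightarrow> halted q \<and> norm2 \<psi> \<noteq> 0 \<longrightarrow>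
      (case map_tm_out Inl (tm_output M x) of OYes \<Rightarrow> q = Yes | ONo \<Rightarrow> q = No
       | OTape ys \<Rightarrow> q = Halt \<and> (\<exists>c u. c \<noteq> 0 \<and> \<psi> = (\<lambda>v. if v = u then c else 0) \<and> trim (cq_qblank MQ) u = ys))"
    unfolding e prod.case
  proof (intro impI, elim conjE)
    assume hq: "halted q" and n0: "norm2 \<psi> \<noteq> 0"
    have nz: "\<psi> \<noteq> (\<lambda>_. 0)" using n0 by auto
    have nSt: "\<forall>n. q \<noteq> St n" using hq by (simp add: halted_def)
    obtain \<alpha> where R: "q = stm (cP x k)" "\<psi> = bs \<alpha> (Inl \<circ> ct x k)"
      using I nz nSt unfolding InvC_def by blast
    have hk: "halted (cP x k)" using hq R by simp
    have a0: "\<alpha> \<noteq> 0" using nz R by (auto simp: bs_def fun_eq_iff)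
    have Tk: "TT x \<le> k" unfolding TT_def using hk by (rule Least_le)
    have ce: "tm_conf M x k = tm_conf M x (TT x)" by (rule halted_stays'[OF TT_halted[OF hl] Tk])
    have out: "tm_output M x = (case cP x k of Yes \<Rightarrow> OYes | No \<Rightarrow> ONo | _ \<Rightarrow> OTape (trim (tm_blank M) (ct x k)))"
    proof -
      have L: "(LEAST n. halted (fst (tm_conf M x n))) = TT x" by (simp add: TT_def cP_def)
      have C: "tm_conf M x (TT x) = (cP x k, ct x k, ch x k)" using ce conf_eta[of x k] by simp
      show ?thesis unfolding tm_output_def L C by simp
    qed
    show "case map_tm_out Inl (tm_output M x) of OYes \<Rightarrow> q = Yes | ONo \<Rightarrow> q = No
       | OTape ys \<Rightarrow> q = Halt \<and> (\<exists>c u. c \<noteq> 0 \<and> \<psi> = (\<lambda>v. if v = u then c else 0) \<and> trim (cq_qblank MQ) u = ys)"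
    proof (cases "cP x k")
      case (St p) then show ?thesis using hk by (simp add: halted_def)
    next
      case Yes then show ?thesis using out R by simp
    next
      case No then show ?thesis using out R by simp
    next
      case Halt
      have "\<psi> = (\<lambda>v. if v = Inl \<circ> ct x k then \<alpha> else 0)" using R by (simp add: bs_def)
      have tr: "trim (Inl (tm_blank M)) (Inl \<circ> ct x k :: int \<Rightarrow> 'a + nat) = map Inl (trim (tm_blank M) (ct x k))"
        by (rule trim_Inl)
      show ?thesis using out Halt R(1) apply simp
        apply (rule exI[of _ \<alpha>], rule conjI[OF a0], rule exI[of _ "Inl \<circ> ct x k"])
        using R(2) tr by (simp add: bs_def)
    qed
  qed
qed

end

theorem theorem5:
  fixes M :: "('s, 'a) tm" and f :: "nat \<Rightarrow> nat"
  assumes "wf_tm M" and "tm_runs_in_time M f"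
  shows "\<exists>M' :: ('a + nat) cqtm.
           is_mqtm M'
         \<and> cq_qblank M' = Inl (tm_blank M)
         \<and> Inl ` tm_alpha M \<subseteq> cq_qalpha M'
         \<and> (\<exists>c N. \<forall>x. valid_input M x \<and> N \<le> length x \<longrightarrow>
               expected_time M' (map Inl x) \<le> ennreal (c * real (f (length x))))
         \<and> (\<forall>x. valid_input M x \<longrightarrow>
               cq_outputs M' (map Inl x) (map_tm_out Inl (tm_output M x)))"
proof -
  have fin: "finite (tm_states M)" "finite (tm_alpha M)" using assms(1) by (auto simp: wf_tm_def)
  obtain sym :: "'a \<Rightarrow> nat" where sym: "inj_on sym (tm_alpha M)"
    using finite_imp_inj_to_nat_seg[OF fin(2)] by blast
  have finP: "finite (phases M)" using fin unfolding phases_def by auto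
  obtain enc :: "('s, 'a) ph \<Rightarrow> nat" where enc: "inj_on enc (phases M)"
    using finite_imp_inj_to_nat_seg[OF finP] by blast
  interpret S: sim M sym enc using assms(1) sym enc by unfold_locales
  have hl: "\<exists>n. halted (S.cP x n)" and hn: "\<exists>n\<le>f (length x). halted (S.cP x n)" if vi: "valid_input M x" for x
    using assms(2) vi unfolding tm_runs_in_time_def S.cP_def by blast+
  show ?thesis
  proof (intro exI[of _ S.MQ] conjI)
    show "is_mqtm S.MQ" by (rule S.is_mqtm_MQ)
    show "cq_qblank S.MQ = Inl (tm_blank M)" by simp
    show "Inl ` tm_alpha M \<subseteq> cq_qalpha S.MQ" by (simp add: S.SQ_def)
    show "\<exists>c N. \<forall>x. valid_input M x \<and> N \<le> length x \<longrightarrow>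
          expected_time S.MQ (map Inl x) \<le> ennreal (c * real (f (length x)))"
    proof -
    have "\<forall>x. valid_input M x \<longrightarrow> expected_time S.MQ (map Inl x) \<le> ennreal (6 * real (f (length x)))"
    proof (intro allI impI)
      fix x assume vi: "valid_input M x"
      obtain n where n: "n \<le> f (length x)" "halted (S.cP x n)" using hn[OF vi] by blast
      have "S.TT x \<le> n" unfolding S.TT_def using n(2) by (rule Least_le)
      then have t1: "real (S.TT x) \<le> real (f (length x))" using n(1) by simp
      have t2: "1 \<le> real (S.TT x)" using S.TT_ge1[OF hl[OF vi]] by simp
      have "1 + 5 * real (S.TT x) \<le> 6 * real (f (length x))" using t1 t2 by linarith
      then have "ennreal (1 + 5 * real (S.TT x)) \<le> ennreal (6 * real (f (length x)))" by (rule ennreal_leI)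
      then show "expected_time S.MQ (map Inl x) \<le> ennreal (6 * real (f (length x)))"
        using S.expected_bound[OF vi hl[OF vi]] by (rule order_trans[rotated])
    qed
    then show ?thesis by blast
    qed
    show "\<forall>x. valid_input M x \<longrightarrow> cq_outputs S.MQ (map Inl x) (map_tm_out Inl (tm_output M x))"
      using S.outputs hl by blast
  qed
qed

end
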